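(* Let $\alpha_1,\alpha_2,\alpha_3,\beta_1,\beta_2,\beta_3,\beta_4,\gamma_1,\gamma_2,\gamma_3,\gamma_4$ be positive real constants satisfying $$\alpha_1+\alpha_2+\alpha_3=\beta_1-\beta_4=\gamma_1-\gamma_4.$$ Set $A_4=\alpha_1-(\gamma_1-\gamma_4)-\gamma_2$, $A_5=\beta_2-\gamma_2$, $A_6=\alpha_2-\gamma_3$, $A_7=(\beta_1-\beta_2-\beta_3-\beta_4)-(\gamma_1-\gamma_4)-\gamma_3$, and consider the planar linear system $$\frac{dx_0}{dt}=A_4x_0+A_5x_1+\gamma_2,\qquad \frac{dx_1}{dt}=A_6x_0+A_7x_1+\gamma_3.$$ Then this system has a unique fixed point $E=(x_0^*,x_1^* )$, it is stable, and $$x_0^*=\frac{A_5\gamma_3-A_7\gamma_2}{A_4A_7-A_5A_6}>0,\qquad x_1^*=\frac{A_6\gamma_2-A_4\gamma_3}{A_4A_7-A_5A_6}>0.$$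
   Context: This is the "reversible model" for the proportions $x_0,x_1$ (and $x_2=1-x_0-x_1$) of three cancer cell phenotypes (CSC$_0$, NSCC$_1$, NSCC$_2$) in the special case where the per capita growth rate of the total population due to each phenotype is the same. The parameters are rates: $\alpha_1$ (CSC symmetric division), $\alpha_2,\alpha_3$ (asymmetric CSC division producing NSCC$_1$, NSCC$_2$), $\beta_1,\gamma_1$ (NSCC divisions), $\beta_2,\gamma_2$ (de-differentiation to CSC), $\beta_3,\gamma_3$ (interconversion between NSCC$_1$ and NSCC$_2$), $\beta_4,\gamma_4$ (death). "Stable" means the fixed point is asymptotically stable (both eigenvalues of the linearization have negative real part). *)

theory Defs
  imports "HOL-Analysis.Analysis"
begin

definition lin_field ::
  "real \<Rightarrow> real \<Rightarrow> real \<Rightarrow> real \<Rightarrow> real \<Rightarrow> real \<Rightarrow> real \<times> real \<Rightarrow> real \<times> real" where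
  "lin_field a4 a5 a6 a7 g2 g3 =
     (\<lambda>(x0, x1). (a4 * x0 + a5 * x1 + g2, a6 * x0 + a7 * x1 + g3))"

definition is_fixed_point :: "(real \<times> real \<Rightarrow> real \<times> real) \<Rightarrow> real \<times> real \<Rightarrow> bool" where
  "is_fixed_point F p \<longleftrightarrow> F p = (0, 0)"

definition lin_jacobian :: "real \<Rightarrow> real \<Rightarrow> real \<Rightarrow> real \<Rightarrow> complex^2^2" where
  "lin_jacobian a4 a5 a6 a7 =
     vector [vector [complex_of_real a4, complex_of_real a5],
             vector [complex_of_real a6, complex_of_real a7]]"

definition is_eigenvalue :: "complex^'n^'n \<Rightarrow> complex \<Rightarrow> bool" where
  "is_eigenvalue M l \<longleftrightarrow> det (mat l - M) = 0"

text \<open>Asymptotic stability of a fixed point of the linear system: every eigenvalue of the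
  linearization has negative real part (for a linear system the linearization is the
  same at every point).\<close>
definition lin_stable :: "real \<Rightarrow> real \<Rightarrow> real \<Rightarrow> real \<Rightarrow> bool" where
  "lin_stable a4 a5 a6 a7 \<longleftrightarrow>
     (\<forall>l. is_eigenvalue (lin_jacobian a4 a5 a6 a7) l \<longrightarrow> Re l < 0)"

end

theory Submission
  imports Defs
begin

lemma eig_re_neg:
  fixes a4 a5 a6 a7 :: real
  assumes T: "a4 + a7 < 0" and D: "a4*a7 - a5*a6 > 0"
  shows "lin_stable a4 a5 a6 a7"
  unfolding lin_stable_def is_eigenvalue_def
proof (intro allI impI)
  fix l :: complex
  assume "det (mat l - lin_jacobian a4 a5 a6 a7) = 0"
  hence h: "(l - of_real a4) * (l - of_real a7) - of_real a5 * of_real a6 = 0"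
    by (simp add: det_2 lin_jacobian_def mat_def)
  obtain x y where l: "l = Complex x y" by (cases l)
  from h have re: "(x - a4)*(x - a7) - y*y - a5*a6 = 0"
    and im: "y*(x-a7) + (x-a4)*y = 0"
    by (simp_all add: l complex_eq_iff)
  show "Re l < 0"
  proof (cases "y = 0")
    case True
    show ?thesis
    proof (rule ccontr)
      assume "\<not> Re l < 0"
      hence x0: "x \<ge> 0" by (simp add: l)
      have "x*x \<ge> 0" by simp
      moreover have "-(a4+a7)*x \<ge> 0" using x0 T by simp
      moreover have "(x - a4)*(x - a7) - a5*a6 = x*x + (-(a4+a7)*x) + (a4*a7 - a5*a6)"
        by (simp add: algebra_simps)
      ultimately have "(x - a4)*(x - a7) - a5*a6 > 0" using D by linarith
      thus False using re True by simp
    qed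
  next
    case False
    from im have "y*(2*x - a4 - a7) = 0" by (simp add: algebra_simps)
    with False have "2*x = a4 + a7" by simp
    thus ?thesis using T by (simp add: l)
  qed
qed

theorem theorem1:
  fixes \<alpha>1 \<alpha>2 \<alpha>3 \<beta>1 \<beta>2 \<beta>3 \<beta>4 \<gamma>1 \<gamma>2 \<gamma>3 \<gamma>4 A4 A5 A6 A7 :: real
  assumes pos: "\<alpha>1 > 0" "\<alpha>2 > 0" "\<alpha>3 > 0" "\<beta>1 > 0" "\<beta>2 > 0" "\<beta>3 > 0" "\<beta>4 > 0"
      "\<gamma>1 > 0" "\<gamma>2 > 0" "\<gamma>3 > 0" "\<gamma>4 > 0"
    and eq1: "\<alpha>1 + \<alpha>2 + \<alpha>3 = \<beta>1 - \<beta>4"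
    and eq2: "\<beta>1 - \<beta>4 = \<gamma>1 - \<gamma>4"
    and A4: "A4 = \<alpha>1 - (\<gamma>1 - \<gamma>4) - \<gamma>2"
    and A5: "A5 = \<beta>2 - \<gamma>2"
    and A6: "A6 = \<alpha>2 - \<gamma>3"
    and A7: "A7 = (\<beta>1 - \<beta>2 - \<beta>3 - \<beta>4) - (\<gamma>1 - \<gamma>4) - \<gamma>3"
  shows "(\<exists>!E. is_fixed_point (lin_field A4 A5 A6 A7 \<gamma>2 \<gamma>3) E) \<and>
         lin_stable A4 A5 A6 A7 \<and>
         is_fixed_point (lin_field A4 A5 A6 A7 \<gamma>2 \<gamma>3)
           ((A5 * \<gamma>3 - A7 * \<gamma>2) / (A4 * A7 - A5 * A6),
            (A6 * \<gamma>2 - A4 * \<gamma>3) / (A4 * A7 - A5 * A6)) \<and>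
         (A5 * \<gamma>3 - A7 * \<gamma>2) / (A4 * A7 - A5 * A6) > 0 \<and>
         (A6 * \<gamma>2 - A4 * \<gamma>3) / (A4 * A7 - A5 * A6) > 0"
proof -
  have a4: "A4 = -(\<alpha>2+\<alpha>3+\<gamma>2)" using A4 eq1 eq2 by simp
  have a7: "A7 = -(\<beta>2+\<beta>3+\<gamma>3)" using A7 eq1 eq2 by simp
  define D where "D = A4 * A7 - A5 * A6"
  have Dexp: "D = ((\<alpha>2+\<alpha>3)*(\<beta>2+\<beta>3) - \<alpha>2*\<beta>2) + (\<alpha>2+\<alpha>3)*\<gamma>3 + \<beta>2*\<gamma>3
      + \<gamma>2*(\<beta>2+\<beta>3) + \<gamma>2*\<alpha>2"
    unfolding D_def a4 a7 A5 A6 by (simp add: algebra_simps)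
  have "(\<alpha>2+\<alpha>3)*(\<beta>2+\<beta>3) - \<alpha>2*\<beta>2 > 0"
    using pos by (simp add: algebra_simps add_pos_pos mult_pos_pos)
  hence Dpos: "D > 0" unfolding Dexp using pos
    by (simp add: add_pos_pos mult_pos_pos)
  have n0: "A5 * \<gamma>3 - A7 * \<gamma>2 = \<beta>2*\<gamma>3 + (\<beta>2+\<beta>3)*\<gamma>2"
    unfolding a7 A5 by (simp add: algebra_simps)
  have n1: "A6 * \<gamma>2 - A4 * \<gamma>3 = \<alpha>2*\<gamma>2 + (\<alpha>2+\<alpha>3)*\<gamma>3"
    unfolding a4 A6 by (simp add: algebra_simps)
  have n0p: "A5 * \<gamma>3 - A7 * \<gamma>2 > 0" unfolding n0 using pos
    by (simp add: add_pos_pos mult_pos_pos)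
  have n1p: "A6 * \<gamma>2 - A4 * \<gamma>3 > 0" unfolding n1 using pos
    by (simp add: add_pos_pos mult_pos_pos)
  have fp: "is_fixed_point (lin_field A4 A5 A6 A7 \<gamma>2 \<gamma>3)
           ((A5 * \<gamma>3 - A7 * \<gamma>2) / D, (A6 * \<gamma>2 - A4 * \<gamma>3) / D)"
    using Dpos unfolding is_fixed_point_def lin_field_def
    by (simp add: field_simps D_def)
  have uniq: "\<And>p. is_fixed_point (lin_field A4 A5 A6 A7 \<gamma>2 \<gamma>3) p \<Longrightarrow>
      p = ((A5 * \<gamma>3 - A7 * \<gamma>2) / D, (A6 * \<gamma>2 - A4 * \<gamma>3) / D)"
  proof -
    fix p assume "is_fixed_point (lin_field A4 A5 A6 A7 \<gamma>2 \<gamma>3) p"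
    then obtain x y where p: "p = (x,y)" and e1: "A4*x + A5*y + \<gamma>2 = 0"
      and e2: "A6*x + A7*y + \<gamma>3 = 0"
      unfolding is_fixed_point_def lin_field_def by (cases p) auto
    have "D*x = A5 * \<gamma>3 - A7 * \<gamma>2"
    proof -
      have "D*x = A7*(A4*x + A5*y + \<gamma>2) - A5*(A6*x + A7*y + \<gamma>3) + (A5 * \<gamma>3 - A7 * \<gamma>2)"
        unfolding D_def by (simp add: algebra_simps)
      thus ?thesis using e1 e2 by simp
    qed
    moreover have "D*y = A6 * \<gamma>2 - A4 * \<gamma>3"
    proof -
      have "D*y = A4*(A6*x + A7*y + \<gamma>3) - A6*(A4*x + A5*y + \<gamma>2) + (A6 * \<gamma>2 - A4 * \<gamma>3)"
        unfolding D_def by (simp add: algebra_simps)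
      thus ?thesis using e1 e2 by simp
    qed
    ultimately show "p = ((A5 * \<gamma>3 - A7 * \<gamma>2) / D, (A6 * \<gamma>2 - A4 * \<gamma>3) / D)"
      using Dpos p by (simp add: field_simps)
  qed
  have st: "lin_stable A4 A5 A6 A7"
    by (rule eig_re_neg) (use pos a4 a7 Dpos D_def in auto)
  have ex: "\<exists>!E. is_fixed_point (lin_field A4 A5 A6 A7 \<gamma>2 \<gamma>3) E"
    by (rule ex1I[of _ "((A5 * \<gamma>3 - A7 * \<gamma>2) / D, (A6 * \<gamma>2 - A4 * \<gamma>3) / D)"])
       (rule fp, erule uniq)
  have q1: "(A5 * \<gamma>3 - A7 * \<gamma>2) / D > 0" using n0p Dpos by simp
  have q2: "(A6 * \<gamma>2 - A4 * \<gamma>3) / D > 0" using n1p Dpos by simp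
  show ?thesis
    using ex st fp q1 q2 unfolding D_def by blast
qed

end
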